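(* Let $\mathcal{T}\subset\mathbb{R}$ be a compact interval of positive length, let $y_1,\dots,y_n$ and $g$ be continuous real functions on $\mathcal{T}$, and let $\alpha\in[1/(l+1),1)$. Define $k$, $\mathcal{H}_2$ and $M$ as in the context, and assume $M(t)>0$ for all $t\in\mathcal{T}$. Set $$\bar s^c(t):=\frac{M(t)}{\int_{\mathcal{T}}M(u)\,du}.$$ Then $$k^{\bar s^c}=\int_{\mathcal{T}}M(t)\,dt.$$
   Context: $\{1,\dots,n\}$ is partitioned into $\mathcal{I}_1$ with $|\mathcal{I}_1|=m\ge1$ and $\mathcal{I}_2$ with $|\mathcal{I}_2|=l\ge1$. Put $r:=\lceil (l+1)(1-\alpha)\rceil$. Let $k$ be the $r$-th smallest value of the multiset $\{\sup_{t\in\mathcal{T}}|y_h(t)-g(t)|:h\in\mathcal{I}_2\}$. Define $$\mathcal{H}_2:=\{j\in\mathcal{I}_2:\sup_{t\in\mathcal{T}}|y_j(t)-g(t)|\le k\},\qquad M(t):=\max_{j\in\mathcal{H}_2}|y_j(t)-g(t)|.$$ For any bounded function $u:\mathcal{T}\to(0,\infty)$, define the scores $R^u_h:=\sup_{t\in\mathcal{T}}|y_h(t)-g(t)|/u(t)$ for $h\in\mathcal{I}_2$, and let $k^u$ be the $r$-th smallest value of the multiset $\{R^u_h:h\in\mathcal{I}_2\}$. *)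

theory Defs
  imports "HOL-Analysis.Analysis" "HOL-Library.Multiset"
begin

definition rth_smallest :: "nat \<Rightarrow> real multiset \<Rightarrow> real" where
  "rth_smallest r A = sorted_list_of_multiset A ! (r - 1)"

definition conf_rank :: "real \<Rightarrow> nat \<Rightarrow> nat" where
  "conf_rank \<alpha> l = nat \<lceil>(real l + 1) * (1 - \<alpha>)\<rceil>"

definition kq :: "real set \<Rightarrow> (nat \<Rightarrow> real \<Rightarrow> real) \<Rightarrow> (real \<Rightarrow> real) \<Rightarrow> nat set \<Rightarrow> real \<Rightarrow> real" where
  "kq T y g I2 \<alpha> = rth_smallest (conf_rank \<alpha> (card I2))
      (image_mset (\<lambda>h. SUP t\<in>T. \<bar>y h t - g t\<bar>) (mset_set I2))"

definition H2set :: "real set \<Rightarrow> (nat \<Rightarrow> real \<Rightarrow> real) \<Rightarrow> (real \<Rightarrow> real) \<Rightarrow> nat set \<Rightarrow> real \<Rightarrow> nat set" where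
  "H2set T y g I2 \<alpha> = {j \<in> I2. (SUP t\<in>T. \<bar>y j t - g t\<bar>) \<le> kq T y g I2 \<alpha>}"

definition Mfun :: "real set \<Rightarrow> (nat \<Rightarrow> real \<Rightarrow> real) \<Rightarrow> (real \<Rightarrow> real) \<Rightarrow> nat set \<Rightarrow> real \<Rightarrow> real \<Rightarrow> real" where
  "Mfun T y g I2 \<alpha> t = Max ((\<lambda>j. \<bar>y j t - g t\<bar>) ` H2set T y g I2 \<alpha>)"

definition ku :: "real set \<Rightarrow> (nat \<Rightarrow> real \<Rightarrow> real) \<Rightarrow> (real \<Rightarrow> real) \<Rightarrow> nat set \<Rightarrow> real \<Rightarrow> (real \<Rightarrow> real) \<Rightarrow> real" where
  "ku T y g I2 \<alpha> u = rth_smallest (conf_rank \<alpha> (card I2))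
      (image_mset (\<lambda>h. SUP t\<in>T. \<bar>y h t - g t\<bar> / u t) (mset_set I2))"

end

theory Submission imports Defs begin

lemma cnt_conv: "size (filter_mset P A) = card {i. i < length (sorted_list_of_multiset A) \<and> P (sorted_list_of_multiset A ! i)}"
proof -
  have "size (filter_mset P A) = size (filter_mset P (mset (sorted_list_of_multiset A)))" by simp
  also have "\<dots> = length (filter P (sorted_list_of_multiset A))" by (metis mset_filter size_mset)
  finally show ?thesis by (simp add: length_filter_conv_card)
qed

lemma rank_props:
  fixes A :: "real multiset"
  assumes "1 \<le> r" "r \<le> size A"
  shows "size (filter_mset (\<lambda>x. x < rth_smallest r A) A) < r"
    and "r \<le> size (filter_mset (\<lambda>x. x \<le> rth_smallest r A) A)"
proof -
  define xs where "xs = sorted_list_of_multiset A"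
  have len: "length xs = size A" unfolding xs_def by (metis mset_sorted_list_of_multiset size_mset)
  have so: "sorted xs" unfolding xs_def by simp
  have v: "rth_smallest r A = xs ! (r-1)" unfolding xs_def rth_smallest_def by simp
  have "{i. i < length xs \<and> xs ! i < xs ! (r-1)} \<subseteq> {..<r-1}"
  proof
    fix i assume "i \<in> {i. i < length xs \<and> xs ! i < xs ! (r-1)}"
    hence "i < length xs" "xs ! i < xs ! (r-1)" by auto
    moreover have "r - 1 \<le> i \<Longrightarrow> xs ! (r-1) \<le> xs ! i" using so `i < length xs` by (simp add: sorted_iff_nth_mono)
    ultimately show "i \<in> {..<r-1}" by force
  qed
  hence "card {i. i < length xs \<and> xs ! i < xs ! (r-1)} \<le> r - 1"
    by (metis card_lessThan card_mono finite_lessThan)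
  thus "size (filter_mset (\<lambda>x. x < rth_smallest r A) A) < r"
    using assms cnt_conv[of "\<lambda>x. x < xs ! (r-1)" A] unfolding v xs_def by linarith
  have "{..<r} \<subseteq> {i. i < length xs \<and> xs ! i \<le> xs ! (r-1)}"
  proof
    fix i assume "i \<in> {..<r}"
    hence i: "i \<le> r - 1" "r - 1 < length xs" using len assms by auto
    hence "xs ! i \<le> xs ! (r-1)" using so by (simp add: sorted_iff_nth_mono)
    thus "i \<in> {i. i < length xs \<and> xs ! i \<le> xs ! (r-1)}" using i by simp
  qed
  hence "r \<le> card {i. i < length xs \<and> xs ! i \<le> xs ! (r-1)}"
    using card_mono[of "{i. i < length xs \<and> xs ! i \<le> xs ! (r-1)}" "{..<r}"] by simp
  thus "r \<le> size (filter_mset (\<lambda>x. x \<le> rth_smallest r A) A)"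
    using cnt_conv[of _ A] unfolding v xs_def by simp
qed

lemma rank_char:
  fixes A :: "real multiset"
  assumes "1 \<le> r" "r \<le> size A" "size (filter_mset (\<lambda>x. x < v) A) < r"
    "r \<le> size (filter_mset (\<lambda>x. x \<le> v) A)"
  shows "rth_smallest r A = v"
proof (rule ccontr)
  assume ne: "rth_smallest r A \<noteq> v"
  note p = rank_props[OF assms(1,2)]
  show False
  proof (cases "rth_smallest r A < v")
    case True
    have "size (filter_mset (\<lambda>x. x \<le> rth_smallest r A) A) \<le> size (filter_mset (\<lambda>x. x < v) A)"
      by (intro size_mset_mono filter_mset_mono_strong) (use `rth_smallest r A < v` in \<open>auto intro: order.strict_trans1\<close>)
    thus False using p assms by linarith
  next
    case False
    hence "v < rth_smallest r A" using ne by linarith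
    hence "size (filter_mset (\<lambda>x. x \<le> v) A) \<le> size (filter_mset (\<lambda>x. x < rth_smallest r A) A)"
      by (intro size_mset_mono filter_mset_mono_strong) (use `v < rth_smallest r A` in \<open>auto intro: order.strict_trans1\<close>)
    thus False using p assms by linarith
  qed
qed

lemma cnt_img:
  assumes "finite I"
  shows "size (filter_mset P (image_mset f (mset_set I))) = card {h\<in>I. P (f h)}"
  using assms by (simp add: filter_mset_image_mset)

lemma cont_Max:
  fixes f :: "nat \<Rightarrow> real \<Rightarrow> real"
  assumes "finite H" "H \<noteq> {}" "\<And>j. j \<in> H \<Longrightarrow> continuous_on T (f j)"
  shows "continuous_on T (\<lambda>t. Max ((\<lambda>j. f j t) ` H))"
  using assms
proof (induction H rule: finite_ne_induct)
  case (singleton x) thus ?case by simp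
next
  case (insert x F)
  have "(\<lambda>t. Max ((\<lambda>j. f j t) ` insert x F)) = (\<lambda>t. max (f x t) (Max ((\<lambda>j. f j t) ` F)))"
    using insert.hyps by (simp add: Max_insert)
  thus ?case using insert by (simp add: continuous_on_max)
qed

theorem mainTheorem5:
  fixes a b \<alpha> :: real and n :: nat and I1 I2 :: "nat set"
    and y :: "nat \<Rightarrow> real \<Rightarrow> real" and g :: "real \<Rightarrow> real"
  assumes "a < b"
    and "\<And>i. i \<in> {1..n} \<Longrightarrow> continuous_on {a..b} (y i)"
    and "continuous_on {a..b} g"
    and "I1 \<union> I2 = {1..n}" and "I1 \<inter> I2 = {}"
    and "card I1 \<ge> 1" and "card I2 \<ge> 1"
    and "1 / (real (card I2) + 1) \<le> \<alpha>" and "\<alpha> < 1"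
    and "\<And>t. t \<in> {a..b} \<Longrightarrow> Mfun {a..b} y g I2 \<alpha> t > 0"
  shows "ku {a..b} y g I2 \<alpha>
           (\<lambda>t. Mfun {a..b} y g I2 \<alpha> t / integral {a..b} (Mfun {a..b} y g I2 \<alpha>))
         = integral {a..b} (Mfun {a..b} y g I2 \<alpha>)"
proof -
  define T where "T = {a..b}"
  define l where "l = card I2"
  define r where "r = conf_rank \<alpha> l"
  define F where "F = (\<lambda>h t. \<bar>y h t - g t\<bar>)"
  define S where "S = (\<lambda>h. SUP t\<in>T. F h t)"
  define k where "k = kq T y g I2 \<alpha>"
  define H2 where "H2 = H2set T y g I2 \<alpha>"
  define M where "M = Mfun T y g I2 \<alpha>"
  define I where "I = integral T M"
  have T: "compact T" "T \<noteq> {}" using assms(1) by (auto simp: T_def)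
  have fin: "finite I2" using assms(7) card.infinite by fastforce
  have lpos: "real l \<ge> 1" using assms(7) l_def by simp
  have r1: "1 \<le> r"
  proof -
    have "0 < (real l + 1) * (1 - \<alpha>)" using assms(9) by simp
    hence "1 \<le> \<lceil>(real l + 1) * (1 - \<alpha>)\<rceil>" by linarith
    thus ?thesis unfolding r_def conf_rank_def by linarith
  qed
  have r2: "r \<le> l"
  proof -
    have "1 \<le> (real l + 1) * \<alpha>" using assms(8) unfolding l_def[symmetric]
      by (simp add: divide_le_eq mult.commute)
    hence "(real l + 1) * (1 - \<alpha>) \<le> real l" by (simp add: algebra_simps)
    hence "\<lceil>(real l + 1) * (1 - \<alpha>)\<rceil> \<le> int l" by (simp add: ceiling_le_iff)
    thus ?thesis unfolding r_def conf_rank_def by linarith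
  qed
  have I2sub: "I2 \<subseteq> {1..n}" using assms(4) by blast
  have contF: "continuous_on T (F h)" if "h \<in> I2" for h
    unfolding F_def T_def using assms(2,3) I2sub that
    by (intro continuous_intros) auto
  have bddF: "bdd_above (F h ` T)" if "h \<in> I2" for h
    using compact_continuous_image[OF contF[OF that] T(1)]
    by (meson bounded_imp_bdd_above compact_imp_bounded)
  have k_def': "k = rth_smallest r (image_mset S (mset_set I2))"
    unfolding k_def kq_def r_def l_def S_def F_def ..
  have szS: "size (image_mset S (mset_set I2)) = l" by (simp add: l_def)
  note rp = rank_props[OF r1, of "image_mset S (mset_set I2)", unfolded szS, OF r2, folded k_def']
  have c1: "card {h\<in>I2. S h < k} < r" using rp(1) by (simp add: cnt_img[OF fin])
  have H2_eq: "H2 = {h\<in>I2. S h \<le> k}"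
    unfolding H2_def H2set_def k_def S_def F_def ..
  have c2: "r \<le> card H2" using rp(2) unfolding H2_eq by (simp add: cnt_img[OF fin])
  have H2fin: "finite H2" using H2_eq fin by simp
  have H2ne: "H2 \<noteq> {}" using c2 r1 by auto
  have H2I2: "H2 \<subseteq> I2" using H2_eq by auto
  have M_eq: "M t = Max ((\<lambda>j. F j t) ` H2)" for t
    unfolding M_def Mfun_def H2_def F_def ..
  have Mpos: "M t > 0" if "t \<in> T" for t using assms(10) that unfolding M_def T_def by simp
  have contM: "continuous_on T M"
    unfolding M_eq[abs_def] using H2fin H2ne contF H2I2 by (intro cont_Max) auto
  have Mge: "F j t \<le> M t" if "j \<in> H2" for j t
    unfolding M_eq using H2fin that by simp
  have Mle: "M t \<le> k" if "t \<in> T" for t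
  proof -
    have "Max ((\<lambda>j. F j t) ` H2) \<in> (\<lambda>j. F j t) ` H2"
      using H2fin H2ne by (intro Max_in) auto
    then obtain j where j: "j \<in> H2" "M t = F j t"
      unfolding M_eq by auto
    have "F j t \<le> S j" unfolding S_def using bddF[of j] j H2I2 that by (intro cSUP_upper) auto
    also have "S j \<le> k" using j H2_eq by auto
    finally show ?thesis using j by simp
  qed
  have Ipos: "I > 0"
  proof -
    obtain t1 where t1: "t1 \<in> T" "\<And>t. t \<in> T \<Longrightarrow> M t1 \<le> M t"
      using continuous_attains_inf[OF T contM] by auto
    have "integral T (\<lambda>t. M t1) \<le> I" unfolding I_def T_def
      using contM t1 by (intro integral_le integrable_continuous_interval) (auto simp: T_def)
    moreover have "integral T (\<lambda>t. M t1) = (b - a) * M t1" using assms(1) by (simp add: T_def)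
    moreover have "(b - a) * M t1 > 0" using assms(1) Mpos[OF t1(1)] by simp
    ultimately show ?thesis by linarith
  qed
  define u where "u = (\<lambda>t. M t / I)"
  define R where "R = (\<lambda>h. SUP t\<in>T. F h t / u t)"
  have upos: "u t > 0" if "t \<in> T" for t using Mpos[OF that] Ipos by (simp add: u_def)
  have bddR: "bdd_above ((\<lambda>t. F h t / u t) ` T)" if "h \<in> I2" for h
  proof -
    have "continuous_on T (\<lambda>t. F h t / u t)" unfolding u_def
      using contF[OF that] contM Mpos Ipos by (intro continuous_intros) (auto dest: Mpos)
    thus ?thesis using compact_continuous_image[OF _ T(1)]
      by (meson bounded_imp_bdd_above compact_imp_bounded)
  qed
  have ratio_le: "F h t / u t \<le> I \<longleftrightarrow> F h t \<le> M t" if "t \<in> T" for h t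
  proof -
    have "F h t / u t \<le> I \<longleftrightarrow> F h t \<le> I * u t" using upos[OF that] by (simp add: pos_divide_le_eq)
    also have "I * u t = M t" using Ipos by (simp add: u_def)
    finally show ?thesis .
  qed
  have ratio_gt: "I < F h t / u t \<longleftrightarrow> M t < F h t" if "t \<in> T" for h t
    using ratio_le[OF that, of h] by linarith
  have A: "R h \<le> I" if "h \<in> H2" for h
    unfolding R_def using T(2) Mge[OF that] ratio_le by (intro cSUP_least) auto
  have B: "I \<le> R h" if hI: "h \<in> I2" and hk: "S h = k" for h
  proof -
    obtain t0 where t0: "t0 \<in> T" "\<And>t. t \<in> T \<Longrightarrow> F h t \<le> F h t0"
      using continuous_attains_sup[OF T contF[OF hI]] by auto
    have "S h \<le> F h t0" unfolding S_def using T(2) t0 by (intro cSUP_least) auto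
    hence "k \<le> F h t0" using hk by simp
    have hH: "h \<in> H2" using hI hk H2_eq by auto
    have "F h t0 / u t0 = I"
    proof -
      have "F h t0 = M t0" using Mge[OF hH, of t0] Mle[OF t0(1)] \<open>k \<le> F h t0\<close> by linarith
      thus ?thesis using Ipos Mpos[OF t0(1)] by (simp add: u_def)
    qed
    moreover have "F h t0 / u t0 \<le> R h" unfolding R_def using bddR[OF hI] t0(1)
      by (intro cSUP_upper) auto
    ultimately show ?thesis by simp
  qed
  have C: "I < R h" if hI: "h \<in> I2" and hk: "k < S h" for h
  proof -
    obtain t where t: "t \<in> T" "k < F h t"
      using hk less_cSUP_iff[OF T(2) bddF[OF hI], of k] unfolding S_def by auto
    have "M t < F h t" using Mle[OF t(1)] t(2) by linarith
    hence "I < F h t / u t" using ratio_gt[OF t(1)] by simp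
    also have "F h t / u t \<le> R h" unfolding R_def using bddR[OF hI] t(1)
      by (intro cSUP_upper) auto
    finally show ?thesis .
  qed
  have ku_eq: "ku {a..b} y g I2 \<alpha>
           (\<lambda>t. Mfun {a..b} y g I2 \<alpha> t / integral {a..b} (Mfun {a..b} y g I2 \<alpha>))
        = rth_smallest r (image_mset R (mset_set I2))"
    unfolding ku_def R_def u_def r_def l_def F_def M_def I_def T_def ..
  have "rth_smallest r (image_mset R (mset_set I2)) = I"
  proof (rule rank_char[OF r1])
    show "r \<le> size (image_mset R (mset_set I2))" using r2 by (simp add: l_def)
    have "{h\<in>I2. R h < I} \<subseteq> {h\<in>I2. S h < k}"
    proof safe
      fix h assume "h \<in> I2" "R h < I"
      show "S h < k"
      proof (rule ccontr)
        assume "\<not> S h < k"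
        hence "S h = k \<or> k < S h" by linarith
        thus False using B[OF `h \<in> I2`] C[OF `h \<in> I2`] `R h < I` by fastforce
      qed
    qed
    hence "card {h\<in>I2. R h < I} \<le> card {h\<in>I2. S h < k}" using fin by (intro card_mono) auto
    thus "size (filter_mset (\<lambda>x. x < I) (image_mset R (mset_set I2))) < r"
      using c1 by (simp add: cnt_img[OF fin])
    have "H2 \<subseteq> {h\<in>I2. R h \<le> I}" using A H2I2 by auto
    hence "card H2 \<le> card {h\<in>I2. R h \<le> I}" using fin by (intro card_mono) auto
    thus "r \<le> size (filter_mset (\<lambda>x. x \<le> I) (image_mset R (mset_set I2)))"
      using c2 by (simp add: cnt_img[OF fin])
  qed
  thus ?thesis using ku_eq unfolding I_def M_def T_def by simp
qed

end
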